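(* For any $n\ge2$, $\theta\in(0,1/2)$ and $0<\mu\le 9/50$, for all $\mathbf w\in\mathbb R^{n-1}$ with $\frac{\mu}{4\sqrt2}\le\|\mathbf w\|\le\frac1{20\sqrt5}$, $$\frac{\mathbf w^*\nabla_{\mathbf w}\mathbb E\big[h_\mu(\mathbf q(\mathbf w)^*\mathbf x)\big]}{\|\mathbf w\|}\ge\frac{\theta}{20\sqrt{2\pi}},$$ where $\mathbf x\in\mathbb R^n$, $\mathbf x\sim_{i.i.d.}\mathrm{BG}(\theta)$.
   Context: $Z\sim\mathrm{BG}(\theta)$ means $Z=BG$ with $B\sim\mathrm{Ber}(\theta)$, $G\sim\mathcal N(0,1)$ independent; $\mathbf x\sim_{i.i.d.}\mathrm{BG}(\theta)$ means independent $\mathrm{BG}(\theta)$ coordinates. $h_\mu(z)=\mu\log\cosh(z/\mu)$. For $\mathbf w$ in the open unit ball of $\mathbb R^{n-1}$, $\mathbf q(\mathbf w)=(\mathbf w,\sqrt{1-\|\mathbf w\|^2})$. $\nabla_{\mathbf w}$ is the gradient with respect to $\mathbf w$. *)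

theory Defs
  imports "HOL-Probability.Probability"
begin

definition BG :: "real \<Rightarrow> real measure" where
  "BG \<theta> = distr (measure_pmf (bernoulli_pmf \<theta>) \<Otimes>\<^sub>M density lborel std_normal_density) borel
     (\<lambda>(b, g). (if b then 1 else 0) * g)"

text \<open>Law of x in R^n, n = CARD('m) + 1, with iid BG(theta) coordinates; x is split as
  (first n-1 coordinates, last coordinate).\<close>
definition BG_vec :: "real \<Rightarrow> (('m::finite \<Rightarrow> real) \<times> real) measure" where
  "BG_vec \<theta> = (PiM UNIV (\<lambda>_::'m. BG \<theta>)) \<Otimes>\<^sub>M BG \<theta>"

definition hmu :: "real \<Rightarrow> real \<Rightarrow> real" where
  "hmu \<mu> z = \<mu> * ln (cosh (z / \<mu>))"

text \<open>q(w)^* x for x = (x', x_n), q(w) = (w, sqrt(1 - |w|^2)).\<close>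
definition qdot :: "real ^ 'm \<Rightarrow> ('m::finite \<Rightarrow> real) \<times> real \<Rightarrow> real" where
  "qdot w x = (\<Sum>i\<in>UNIV. w $ i * fst x i) + sqrt (1 - (norm w)\<^sup>2) * snd x"

definition objective :: "real \<Rightarrow> real \<Rightarrow> real ^ 'm \<Rightarrow> real" where
  "objective \<theta> \<mu> w = (\<integral>x. hmu \<mu> (qdot w x) \<partial>(BG_vec \<theta> :: (('m::finite \<Rightarrow> real) \<times> real) measure))"

end

theory Submission
  imports Defs
begin

lemma tanh_le_self: "0 \<le> y \<Longrightarrow> tanh y \<le> (y::real)"
proof -
  assume y: "0 \<le> y"
  have "(\<lambda>x. x - tanh x) 0 \<le> (\<lambda>x. x - tanh x) y"
    apply (rule DERIV_nonneg_imp_nondecreasing[OF y])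
    apply (rule exI[of _ "1 - (1 - tanh _ ^ 2)"])
    apply (auto intro!: derivative_eq_intros)
    done
  thus ?thesis by simp
qed

lemma tanh_lower3: "0 \<le> y \<Longrightarrow> y - y^3/3 \<le> tanh (y::real)"
proof -
  assume y: "0 \<le> y"
  have "(\<lambda>x. tanh x - x + x^3/3) 0 \<le> (\<lambda>x. tanh x - x + x^3/3) y"
  proof (rule DERIV_nonneg_imp_nondecreasing[OF y])
    fix x :: real assume x: "0 \<le> x" "x \<le> y"
    have "tanh x ^ 2 \<le> x ^ 2" using tanh_le_self[OF x(1)] x(1)
      by (intro power_mono) auto
    then show "\<exists>d. ((\<lambda>x. tanh x - x + x^3/3) has_real_derivative d) (at x) \<and> 0 \<le> d"
      by (intro exI[of _ "(1 - tanh x ^ 2) - 1 + x^2"]) (auto intro!: derivative_eq_intros)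
  qed
  thus ?thesis by simp
qed

lemma tanh_lipschitz: "\<bar>tanh a - tanh b\<bar> \<le> \<bar>a - (b::real)\<bar>"
proof -
  have m: "tanh y - tanh x \<le> y - x" if "x \<le> y" for x y :: real
  proof -
    have "(\<lambda>z. z - tanh z) x \<le> (\<lambda>z. z - tanh z) y"
      apply (rule DERIV_nonneg_imp_nondecreasing[OF that])
      apply (rule exI[of _ "1 - (1 - tanh _ ^ 2)"])
      apply (auto intro!: derivative_eq_intros)
      done
    thus ?thesis by simp
  qed
  show ?thesis
    using m[of a b] m[of b a] tanh_real_le_iff[of a b] tanh_real_le_iff[of b a]
    by (cases "a \<le> b") (auto simp: abs_if)
qed

lemma hmu_deriv: "0 < \<mu> \<Longrightarrow> (hmu \<mu> has_real_derivative tanh (z / \<mu>)) (at z)"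
  unfolding hmu_def[abs_def]
  by (auto intro!: derivative_eq_intros simp: tanh_def field_simps)

lemma hmu_taylor:
  fixes a b \<mu> :: real
  assumes mu: "0 < \<mu>"
  shows "\<bar>hmu \<mu> b - hmu \<mu> a - tanh (a/\<mu>) * (b - a)\<bar> \<le> (b - a)^2 / \<mu>"
proof (cases "a = b")
  case True then show ?thesis by simp
next
  case False
  have key: "\<bar>hmu \<mu> v - hmu \<mu> u - tanh (a/\<mu>) * (v - u)\<bar> \<le> (b - a)^2 / \<mu>"
    if uv: "u < v" "{u,v} = {a,b}" for u v
  proof -
    obtain z where z: "u < z" "z < v" "hmu \<mu> v - hmu \<mu> u = (v - u) * tanh (z/\<mu>)"
      using MVT2[OF uv(1), of "hmu \<mu>" "\<lambda>z. tanh (z/\<mu>)"] hmu_deriv[OF mu] by blast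
    have za: "\<bar>z - a\<bar> \<le> \<bar>b - a\<bar>" using uv z by (auto simp: doubleton_eq_iff)
    have "\<bar>tanh (z/\<mu>) - tanh (a/\<mu>)\<bar> \<le> \<bar>z/\<mu> - a/\<mu>\<bar>" by (rule tanh_lipschitz)
    also have "\<dots> = \<bar>z - a\<bar> / \<mu>" using mu by (simp add: diff_divide_distrib[symmetric])
    also have "\<dots> \<le> \<bar>b - a\<bar> / \<mu>" using za mu by (simp add: divide_right_mono)
    finally have t: "\<bar>tanh (z/\<mu>) - tanh (a/\<mu>)\<bar> \<le> \<bar>b - a\<bar> / \<mu>" .
    have "\<bar>hmu \<mu> v - hmu \<mu> u - tanh (a/\<mu>) * (v - u)\<bar> = \<bar>v - u\<bar> * \<bar>tanh (z/\<mu>) - tanh (a/\<mu>)\<bar>"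
      by (simp add: z(3) abs_mult[symmetric] algebra_simps)
    also have "\<bar>v - u\<bar> = \<bar>b - a\<bar>" using uv by (auto simp: doubleton_eq_iff)
    also have "\<bar>b - a\<bar> * \<bar>tanh (z/\<mu>) - tanh (a/\<mu>)\<bar> \<le> \<bar>b - a\<bar> * (\<bar>b - a\<bar> / \<mu>)"
      by (intro mult_left_mono t) auto
    also have "\<dots> = (b - a)^2 / \<mu>" by (simp add: power2_eq_square)
    finally show ?thesis .
  qed
  show ?thesis
  proof (cases "a < b")
    case True then show ?thesis using key[of a b] by auto
  next
    case f: False
    with False have "b < a" by auto
    from key[OF this] show ?thesis by (simp add: insert_commute abs_minus_commute algebra_simps)
  qed
qed

lemma hmu_bounds:
  assumes mu: "0 < \<mu>"
  shows "0 \<le> hmu \<mu> z" "hmu \<mu> z \<le> \<bar>z\<bar>"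
proof -
  show "0 \<le> hmu \<mu> z" unfolding hmu_def using mu cosh_real_ge_1[of "z/\<mu>"] by simp
  have "cosh (z/\<mu>) \<le> exp \<bar>z/\<mu>\<bar>"
    unfolding cosh_def by (cases "z \<ge> 0") (auto simp: abs_if)
  then have "ln (cosh (z/\<mu>)) \<le> \<bar>z/\<mu>\<bar>"
    by (metis cosh_real_pos ln_exp ln_le_cancel_iff exp_gt_zero)
  then have "\<mu> * ln (cosh (z/\<mu>)) \<le> \<mu> * \<bar>z/\<mu>\<bar>" using mu by (intro mult_left_mono) auto
  also have "\<dots> = \<bar>z\<bar>" using mu by (simp add: abs_div)
  finally show "hmu \<mu> z \<le> \<bar>z\<bar>" unfolding hmu_def .
qed

lemma xtanh_lower:
  fixes x \<mu> m :: real
  assumes mu: "0 < \<mu>" "\<mu> \<le> m"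
  shows "x^2 / m - x^4 / (3 * m^3) \<le> x * tanh (x / \<mu>)"
proof -
  have m: "0 < m" using mu by linarith
  have "x * tanh (x/\<mu>) = \<bar>x\<bar> * tanh (\<bar>x\<bar>/\<mu>)"
    by (cases "x \<ge> 0") (auto simp: abs_if)
  also have "\<bar>x\<bar> * tanh (\<bar>x\<bar>/m) \<le> \<bar>x\<bar> * tanh (\<bar>x\<bar>/\<mu>)"
    using mu m by (intro mult_left_mono) (auto simp: frac_le)
  finally have 1: "\<bar>x\<bar> * tanh (\<bar>x\<bar>/m) \<le> x * tanh (x/\<mu>)" .
  have "\<bar>x\<bar> * (\<bar>x\<bar>/m - (\<bar>x\<bar>/m)^3/3) \<le> \<bar>x\<bar> * tanh (\<bar>x\<bar>/m)"
    using m by (intro mult_left_mono tanh_lower3) auto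
  moreover have "\<bar>x\<bar> * (\<bar>x\<bar>/m - (\<bar>x\<bar>/m)^3/3) = x^2 / m - x^4 / (3 * m^3)"
    using m by (simp add: field_simps power2_eq_square power4_eq_xxxx power3_eq_cube abs_mult_self_eq)
  ultimately show ?thesis using 1 by linarith
qed



abbreviation NN :: "real measure" where "NN \<equiv> density lborel std_normal_density"

lemma prob_NN: "prob_space NN"
  by (rule prob_space_normal_density) simp

lemma sets_NN[simp, measurable_cong]: "sets NN = sets borel" by simp
lemma space_NN[simp]: "space NN = UNIV" by simp

lemma NN_integrable_iff: "f \<in> borel_measurable borel \<Longrightarrow>
   integrable NN f \<longleftrightarrow> integrable lborel (\<lambda>x. std_normal_density x * f x)"
  by (subst integrable_density) auto

lemma NN_integral: "f \<in> borel_measurable borel \<Longrightarrow>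
   integral\<^sup>L NN f = (\<integral>x. std_normal_density x * f x \<partial>lborel)"
  by (subst integral_density) auto

lemma NN_mom_int: "integrable NN (\<lambda>x. x ^ k)"
  using integrable_std_normal_moment[of k] by (subst NN_integrable_iff) auto

lemma NN_absmom_int: "integrable NN (\<lambda>x. \<bar>x\<bar> ^ k)"
  using integrable_std_normal_moment_abs[of k] by (subst NN_integrable_iff) auto

lemma NN_mom1: "integral\<^sup>L NN (\<lambda>x. x) = 0"
  using integral_std_normal_moment_odd[of 0] by (subst NN_integral) auto
lemma NN_mom2: "integral\<^sup>L NN (\<lambda>x. x^2) = 1"
  using integral_std_normal_moment_even[of 1] by (subst NN_integral) auto
lemma NN_mom3: "integral\<^sup>L NN (\<lambda>x. x^3) = 0"
  using integral_std_normal_moment_odd[of 1] by (subst NN_integral) (auto simp: numeral_3_eq_3)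
lemma NN_mom4: "integral\<^sup>L NN (\<lambda>x. x^4) = 3"
proof -
  have "integral\<^sup>L NN (\<lambda>x. x^4) = fact (2*2) / (2^2 * fact 2)"
    using integral_std_normal_moment_even[of 2] by (subst NN_integral) auto
  also have "\<dots> = 3" by (simp add: fact_numeral)
  finally show ?thesis .
qed
lemma NN_absmom1: "integral\<^sup>L NN (\<lambda>x. \<bar>x\<bar>) = sqrt (2/pi)"
  using integral_std_normal_moment_abs_odd[of 0] by (subst NN_integral) auto

lemma NN_abs_int: "integrable NN (\<lambda>x. \<bar>x\<bar>)"
  using NN_absmom_int[of 1] by simp

lemma BG_prob: assumes "0 \<le> \<theta>" "\<theta> \<le> 1" shows "prob_space (BG \<theta>)"
proof -
  interpret N: prob_space NN by (rule prob_NN)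
  interpret B: prob_space "measure_pmf (bernoulli_pmf \<theta>)" by (rule prob_space_measure_pmf)
  interpret P: pair_prob_space "measure_pmf (bernoulli_pmf \<theta>)" NN ..
  show ?thesis unfolding BG_def by (intro P.prob_space_distr) auto
qed

lemma sets_BG[simp, measurable_cong]: "sets (BG \<theta>) = sets borel" by (simp add: BG_def)
lemma space_BG[simp]: "space (BG \<theta>) = UNIV" by (simp add: BG_def)

lemma BG_integral:
  fixes f :: "real \<Rightarrow> real"
  assumes th: "0 \<le> \<theta>" "\<theta> \<le> 1" and f[measurable]: "f \<in> borel_measurable borel"
    and fi: "integrable NN f"
  shows "integrable (BG \<theta>) f" "integral\<^sup>L (BG \<theta>) f = (1 - \<theta>) * f 0 + \<theta> * integral\<^sup>L NN f"
proof -
  interpret N: prob_space NN by (rule prob_NN)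
  interpret B: prob_space "measure_pmf (bernoulli_pmf \<theta>)" by (rule prob_space_measure_pmf)
  interpret P: pair_prob_space "measure_pmf (bernoulli_pmf \<theta>)" NN ..
  let ?B = "measure_pmf (bernoulli_pmf \<theta>)"
  let ?T = "\<lambda>(b, g). (if b then 1 else 0) * (g::real)"
  have T[measurable]: "?T \<in> borel_measurable (?B \<Otimes>\<^sub>M NN)" by measurable
  have fin: "finite (set_pmf (bernoulli_pmf \<theta>))" by simp
  have ib: "\<And>b. integrable NN (\<lambda>g. f (?T (b, g)))"
    using fi by (auto simp: if_distrib)
  have int: "integrable (?B \<Otimes>\<^sub>M NN) (\<lambda>x. f (?T x))"
  proof (rule P.Fubini_integrable)
    show "AE b in ?B. integrable NN (\<lambda>g. f (?T (b,g)))" by (intro AE_I2 ib)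
  qed (auto intro: integrable_measure_pmf_finite[OF fin])
  then show "integrable (BG \<theta>) f" unfolding BG_def
    by (subst integrable_distr_eq) auto
  have "integral\<^sup>L (BG \<theta>) f = integral\<^sup>L (?B \<Otimes>\<^sub>M NN) (\<lambda>x. f (?T x))"
    unfolding BG_def by (subst integral_distr) auto
  also have "\<dots> = (\<integral>b. (\<integral>g. f (?T (b, g)) \<partial>NN) \<partial>?B)"
    by (rule P.integral_fst'[OF int, symmetric])
  also have "\<dots> = (\<Sum>b\<in>UNIV. (\<integral>g. f (?T (b, g)) \<partial>NN) * pmf (bernoulli_pmf \<theta>) b)"
    by (rule integral_measure_pmf_real) auto
  also have "\<dots> = (1 - \<theta>) * f 0 + \<theta> * integral\<^sup>L NN f"
    using th N.prob_space by (simp add: UNIV_bool)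
  finally show "integral\<^sup>L (BG \<theta>) f = (1 - \<theta>) * f 0 + \<theta> * integral\<^sup>L NN f" .
qed

lemma BG_moments:
  assumes th: "0 \<le> \<theta>" "\<theta> \<le> 1"
  shows "\<And>k. integrable (BG \<theta>) (\<lambda>x. x ^ k)"
    "integrable (BG \<theta>) (\<lambda>x. \<bar>x\<bar>)"
    "integral\<^sup>L (BG \<theta>) (\<lambda>x. x) = 0"
    "integral\<^sup>L (BG \<theta>) (\<lambda>x. x^2) = \<theta>"
    "integral\<^sup>L (BG \<theta>) (\<lambda>x. x^3) = 0"
    "integral\<^sup>L (BG \<theta>) (\<lambda>x. x^4) = 3 * \<theta>"
    "integral\<^sup>L (BG \<theta>) (\<lambda>x. \<bar>x\<bar>) \<le> \<theta>"
proof -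
  show "integrable (BG \<theta>) (\<lambda>x. x ^ k)" for k by (rule BG_integral[OF th _ NN_mom_int]) auto
  show "integrable (BG \<theta>) (\<lambda>x. \<bar>x\<bar>)" by (rule BG_integral[OF th _ NN_abs_int]) auto
  show "integral\<^sup>L (BG \<theta>) (\<lambda>x. x) = 0"
    using BG_integral(2)[OF th _ NN_mom_int[of 1]] NN_mom1 by simp
  show "integral\<^sup>L (BG \<theta>) (\<lambda>x. x^2) = \<theta>"
    using BG_integral(2)[OF th _ NN_mom_int[of 2]] NN_mom2 by simp
  show "integral\<^sup>L (BG \<theta>) (\<lambda>x. x^3) = 0"
    using BG_integral(2)[OF th _ NN_mom_int[of 3]] NN_mom3 by simp
  show "integral\<^sup>L (BG \<theta>) (\<lambda>x. x^4) = 3 * \<theta>"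
    using BG_integral(2)[OF th _ NN_mom_int[of 4]] NN_mom4 by simp
  have "sqrt (2/pi) \<le> 1" using pi_gt3 by (simp add: real_sqrt_le_1_iff)
  then show "integral\<^sup>L (BG \<theta>) (\<lambda>x. \<bar>x\<bar>) \<le> \<theta>"
    using BG_integral(2)[OF th _ NN_abs_int] NN_absmom1 th
    by (simp add: mult_left_le)
qed



abbreviation PP :: "real \<Rightarrow> ('m::finite \<Rightarrow> real) measure" where
  "PP \<theta> \<equiv> PiM UNIV (\<lambda>_::'m. BG \<theta>)"

lemma PP_prob: "0 \<le> \<theta> \<Longrightarrow> \<theta> \<le> 1 \<Longrightarrow> prob_space (PP \<theta> :: ('m::finite \<Rightarrow> real) measure)"
  by (intro prob_space_PiM BG_prob) auto

lemma PP_component: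
  assumes "0 \<le> \<theta>" "\<theta> \<le> 1"
  shows "distr (PP \<theta> :: ('m::finite \<Rightarrow> real) measure) (BG \<theta>) (\<lambda>x. x i) = BG \<theta>"
  by (rule distr_PiM_component) (auto intro: BG_prob assms)

lemma PP_comp_integral:
  fixes f :: "real \<Rightarrow> real"
  assumes th: "0 \<le> \<theta>" "\<theta> \<le> 1" and f[measurable]: "f \<in> borel_measurable borel"
  shows "integrable (PP \<theta> :: ('m::finite \<Rightarrow> real) measure) (\<lambda>x. f (x i)) \<longleftrightarrow> integrable (BG \<theta>) f"
    "integral\<^sup>L (PP \<theta> :: ('m::finite \<Rightarrow> real) measure) (\<lambda>x. f (x i)) = integral\<^sup>L (BG \<theta>) f"
proof -
  have e: "BG \<theta> = distr (PP \<theta> :: ('m::finite \<Rightarrow> real) measure) (BG \<theta>) (\<lambda>x. x i)"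
    using PP_component[OF th, where 'm='m and i=i] by simp
  show "integrable (PP \<theta> :: ('m::finite \<Rightarrow> real) measure) (\<lambda>x. f (x i)) \<longleftrightarrow> integrable (BG \<theta>) f"
    by (subst e) (simp add: integrable_distr_eq)
  show "integral\<^sup>L (PP \<theta> :: ('m::finite \<Rightarrow> real) measure) (\<lambda>x. f (x i)) = integral\<^sup>L (BG \<theta>) f"
    by (subst e) (simp add: integral_distr)
qed

lemma PP_indep:
  assumes th: "0 \<le> \<theta>" "\<theta> \<le> 1"
  shows "prob_space.indep_vars (PP \<theta> :: ('m::finite \<Rightarrow> real) measure) (\<lambda>_. borel) (\<lambda>i x. x i) UNIV"
proof -
  interpret prob_space "PP \<theta> :: ('m::finite \<Rightarrow> real) measure" by (rule PP_prob[OF th])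
  show ?thesis
  proof (subst indep_vars_iff_distr_eq_PiM)
    have "distr (PP \<theta>) (PiM UNIV (\<lambda>_::'m. borel)) (\<lambda>x. \<lambda>i\<in>UNIV. x i) = distr (PP \<theta>) (PiM UNIV (\<lambda>_::'m. borel)) (\<lambda>x. x)"
      by (intro distr_cong) (auto simp: restrict_def)
    also have "\<dots> = PP \<theta>" by (rule distr_id2) (intro sets_PiM_cong; simp)
    also have "\<dots> = PiM UNIV (\<lambda>i::'m. distr (PP \<theta>) borel (\<lambda>x. x i))"
      apply (intro PiM_cong refl)
      using PP_component[OF th] by (metis distr_cong sets_BG)
    finally show "distr (PP \<theta>) (PiM UNIV (\<lambda>_::'m. borel)) (\<lambda>x. \<lambda>i\<in>UNIV. x i) = PiM UNIV (\<lambda>i::'m. distr (PP \<theta>) borel (\<lambda>x. x i))" .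
  qed auto
qed

lemma (in prob_space) indep_pow:
  fixes A B :: "'a \<Rightarrow> real"
  assumes ind: "indep_var borel A borel B"
    and iA: "integrable M (\<lambda>x. A x ^ p)" and iB: "integrable M (\<lambda>x. B x ^ q)"
  shows "integrable M (\<lambda>x. A x ^ p * B x ^ q)"
    "(\<integral>x. A x ^ p * B x ^ q \<partial>M) = (\<integral>x. A x ^ p \<partial>M) * (\<integral>x. B x ^ q \<partial>M)"
proof -
  have i2: "indep_var borel ((\<lambda>y. y ^ p) \<circ> A) borel ((\<lambda>y. y ^ q) \<circ> B)"
    by (rule indep_var_compose[OF ind]) auto
  show "integrable M (\<lambda>x. A x ^ p * B x ^ q)"
    using indep_var_integrable[OF i2] iA iB by (simp add: comp_def)
  show "(\<integral>x. A x ^ p * B x ^ q \<partial>M) = (\<integral>x. A x ^ p \<partial>M) * (\<integral>x. B x ^ q \<partial>M)"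
    using indep_var_lebesgue_integral[OF i2] iA iB by (simp add: comp_def)
qed

lemma (in prob_space) indep_sum_pow:
  fixes A B :: "'a \<Rightarrow> real"
  assumes ind: "indep_var borel A borel B"
    and iA: "\<And>p. integrable M (\<lambda>x. A x ^ p)" and iB: "\<And>q. integrable M (\<lambda>x. B x ^ q)"
  shows "integrable M (\<lambda>x. (A x + B x) ^ k)"
    "(\<integral>x. (A x + B x) ^ k \<partial>M) = (\<Sum>p\<le>k. of_nat (k choose p) * (\<integral>x. A x ^ p \<partial>M) * (\<integral>x. B x ^ (k - p) \<partial>M))"
proof -
  have e: "(\<lambda>x. (A x + B x) ^ k) = (\<lambda>x. \<Sum>p\<le>k. of_nat (k choose p) * (A x ^ p * B x ^ (k - p)))"
    by (simp add: binomial_ring mult.assoc)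
  show "integrable M (\<lambda>x. (A x + B x) ^ k)"
    unfolding e using indep_pow(1)[OF ind iA iB] by auto
  show "(\<integral>x. (A x + B x) ^ k \<partial>M) = (\<Sum>p\<le>k. of_nat (k choose p) * (\<integral>x. A x ^ p \<partial>M) * (\<integral>x. B x ^ (k - p) \<partial>M))"
    unfolding e using indep_pow[OF ind iA iB]
    by (simp add: integral_sum mult.assoc)
qed

lemma PP_sum_moments:
  fixes w :: "'m::finite \<Rightarrow> real"
  assumes th: "0 \<le> \<theta>" "\<theta> \<le> 1"
  shows "(\<forall>k. integrable (PP \<theta>) (\<lambda>x::'m \<Rightarrow> real. (\<Sum>i\<in>F. w i * x i) ^ k)) \<and>
     (\<integral>x. (\<Sum>i\<in>F. w i * x i) \<partial>PP \<theta>) = 0 \<and>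
     (\<integral>x. (\<Sum>i\<in>F. w i * x i)^2 \<partial>PP \<theta>) = \<theta> * (\<Sum>i\<in>F. (w i)^2) \<and>
     (\<integral>x. (\<Sum>i\<in>F. w i * x i)^3 \<partial>PP \<theta>) = 0 \<and>
     (\<integral>x. (\<Sum>i\<in>F. w i * x i)^4 \<partial>PP \<theta>) \<le> 3 * \<theta> * (\<Sum>i\<in>F. (w i)^2)^2"
proof -
  interpret prob_space "PP \<theta> :: ('m::finite \<Rightarrow> real) measure" by (rule PP_prob[OF th])
  have ind: "indep_vars (\<lambda>_. borel) (\<lambda>i (x::'m \<Rightarrow> real). w i * x i) UNIV"
    by (rule indep_vars_compose2[OF PP_indep[OF th], where Y="\<lambda>i y. w i * y"]) auto
  have compint: "integrable (PP \<theta>) (\<lambda>x::'m \<Rightarrow> real. (w i * x i) ^ p)" for i p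
    using PP_comp_integral(1)[OF th, of "\<lambda>y. (w i * y)^p" i] BG_moments(1)[OF th, of p]
    by (simp add: power_mult_distrib)
  have compE: "(\<integral>x. (w i * x i) ^ p \<partial>PP \<theta>) = w i ^ p * (\<integral>y. y ^ p \<partial>BG \<theta>)" for i p
    using PP_comp_integral(2)[OF th, of "\<lambda>y. (w i * y)^p" i]
    by (simp add: power_mult_distrib)
  have fin: "finite F" by simp
  show ?thesis
    using fin
  proof (induction F rule: finite_induct)
    case empty
    show ?case by (auto simp: power_0_left)
  next
    case (insert j F)
    let ?A = "\<lambda>x::'m \<Rightarrow> real. w j * x j"
    let ?S = "\<lambda>x::'m \<Rightarrow> real. \<Sum>i\<in>F. w i * x i"
    have iv: "indep_var borel ?A borel ?S"
      using indep_vars_sum[OF insert(1,2) indep_vars_subset[OF ind]] by auto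
    have iS: "\<And>q. integrable (PP \<theta>) (\<lambda>x. ?S x ^ q)" using insert(3) by auto
    note sp = indep_sum_pow[OF iv compint iS]
    have eq: "(\<Sum>i\<in>insert j F. w i * x i) = ?A x + ?S x" for x :: "'m \<Rightarrow> real"
      using insert(1,2) by simp
    have E: "(\<integral>x. (\<Sum>i\<in>insert j F. w i * x i) ^ k \<partial>PP \<theta>) =
       (\<Sum>p\<le>k. of_nat (k choose p) * (w j ^ p * (\<integral>y. y ^ p \<partial>BG \<theta>)) * (\<integral>x. ?S x ^ (k - p) \<partial>PP \<theta>))" for k
      unfolding eq sp(2) compE ..
    have S1: "(\<integral>x. ?S x ^ 1 \<partial>PP \<theta>) = 0" using insert(3) by simp
    have S0: "(\<integral>x. ?S x ^ 0 \<partial>PP \<theta>) = 1" by (simp add: prob_space)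
    have B0: "(\<integral>y. y ^ 0 \<partial>BG \<theta>) = 1" using prob_space.prob_space[OF BG_prob[OF th]] by simp
    have B1: "(\<integral>y. y ^ 1 \<partial>BG \<theta>) = 0" using BG_moments(3)[OF th] by simp
    note B = B0 B1 BG_moments(4-6)[OF th]
    let ?s = "\<Sum>i\<in>F. (w i)^2"
    have I: "\<forall>k. integrable (PP \<theta>) (\<lambda>x. (\<Sum>i\<in>insert j F. w i * x i) ^ k)"
      unfolding eq using sp(1) by auto
    have M1: "(\<integral>x. (\<Sum>i\<in>insert j F. w i * x i) \<partial>PP \<theta>) = 0"
      using E[of 1] S0 S1 B by simp
    have M2: "(\<integral>x. (\<Sum>i\<in>insert j F. w i * x i)^2 \<partial>PP \<theta>) = \<theta> * (\<Sum>i\<in>insert j F. (w i)^2)"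
      using E[of 2] S0 S1 B insert(1,2,3) by (simp add: numeral_2_eq_2 algebra_simps)
    have M3: "(\<integral>x. (\<Sum>i\<in>insert j F. w i * x i)^3 \<partial>PP \<theta>) = 0"
      using E[of 3] S0 S1 B insert(3) by (simp add: numeral_3_eq_3)
    have e4: "(\<integral>x. (\<Sum>i\<in>insert j F. w i * x i)^4 \<partial>PP \<theta>) =
        3 * \<theta> * w j ^ 4 + 6 * (w j ^ 2 * \<theta>) * (\<theta> * ?s) + (\<integral>x. ?S x ^ 4 \<partial>PP \<theta>)"
      using E[of 4] S0 S1 B insert(3) by (simp add: eval_nat_numeral atMost_Suc binomial_fact fact_numeral)
    have "\<dots> \<le> 3 * \<theta> * w j ^ 4 + 6 * (w j ^ 2 * \<theta>) * (\<theta> * ?s) + 3 * \<theta> * ?s^2"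
      using insert(3) by simp
    also have "\<dots> \<le> 3 * \<theta> * (w j ^ 2 + ?s)^2"
    proof -
      have s0: "0 \<le> ?s" by (simp add: sum_nonneg)
      have "6 * (w j ^ 2 * \<theta>) * (\<theta> * ?s) \<le> 6 * (w j ^ 2 * \<theta>) * ?s"
        using th s0 by (intro mult_left_mono) (auto intro: mult_left_le_one_le)
      then show ?thesis by (simp add: power2_eq_square power4_eq_xxxx algebra_simps)
    qed
    finally have M4: "(\<integral>x. (\<Sum>i\<in>insert j F. w i * x i)^4 \<partial>PP \<theta>) \<le> 3 * \<theta> * (\<Sum>i\<in>insert j F. (w i)^2)^2"
      using insert(1,2) e4 by simp
    show ?case using I M1 M2 M3 M4 by blast
  qed
qed



lemma hmu_meas[measurable]: "hmu \<mu> \<in> borel_measurable borel"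
  unfolding hmu_def[abs_def] divide_inverse by (intro borel_measurable_continuous_onI continuous_intros) auto

lemma tanh_meas[measurable]: "(tanh :: real \<Rightarrow> real) \<in> borel_measurable borel"
  by (intro borel_measurable_continuous_onI continuous_intros) auto

lemma abs_tanh_le1: "\<bar>tanh (x::real)\<bar> \<le> 1"
  using tanh_real_bounds[of x] by auto

lemma sets_PP[measurable_cong]: "sets (PP \<theta> :: ('m::finite \<Rightarrow> real) measure) = sets (PiM UNIV (\<lambda>_::'m. borel))"
  by (intro sets_PiM_cong) auto

lemma BG_vec_eq: "BG_vec \<theta> = (PP \<theta> :: ('m::finite \<Rightarrow> real) measure) \<Otimes>\<^sub>M BG \<theta>"
  by (simp add: BG_vec_def)

lemma sets_BG_vec[measurable_cong]: "sets (BG_vec \<theta> :: (('m::finite \<Rightarrow> real) \<times> real) measure) = sets (PiM UNIV (\<lambda>_::'m. borel) \<Otimes>\<^sub>M borel)"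
  unfolding BG_vec_def by (intro sets_pair_measure_cong sets_PP) auto

lemma space_BG_vec[simp]: "space (BG_vec \<theta> :: (('m::finite \<Rightarrow> real) \<times> real) measure) = space (PiM UNIV (\<lambda>_::'m. borel)) \<times> UNIV"
  unfolding BG_vec_def by (simp add: space_pair_measure space_PiM)

lemma BG_vec_prob: "0 \<le> \<theta> \<Longrightarrow> \<theta> \<le> 1 \<Longrightarrow> prob_space (BG_vec \<theta> :: (('m::finite \<Rightarrow> real) \<times> real) measure)"
proof -
  assume th: "0 \<le> \<theta>" "\<theta> \<le> 1"
  interpret A: prob_space "PP \<theta> :: ('m::finite \<Rightarrow> real) measure" by (rule PP_prob[OF th])
  interpret B: prob_space "BG \<theta>" by (rule BG_prob[OF th])
  interpret pair_prob_space "PP \<theta> :: ('m::finite \<Rightarrow> real) measure" "BG \<theta>" ..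
  show ?thesis unfolding BG_vec_def by (rule P.prob_space_axioms)
qed

lemma Q_fst:
  fixes f :: "('m::finite \<Rightarrow> real) \<Rightarrow> real"
  assumes th: "0 \<le> \<theta>" "\<theta> \<le> 1" and f[measurable]: "f \<in> borel_measurable (PiM UNIV (\<lambda>_::'m. borel))"
  shows "integrable (BG_vec \<theta>) (\<lambda>x. f (fst x)) \<longleftrightarrow> integrable (PP \<theta>) f"
    "integral\<^sup>L (BG_vec \<theta>) (\<lambda>x. f (fst x)) = integral\<^sup>L (PP \<theta>) f"
proof -
  interpret B: prob_space "BG \<theta>" by (rule BG_prob[OF th])
  have e: "PP \<theta> = distr (BG_vec \<theta>) (PP \<theta>) fst" unfolding BG_vec_def
    by (rule B.distr_pair_fst[symmetric])
  show "integrable (BG_vec \<theta>) (\<lambda>x. f (fst x)) \<longleftrightarrow> integrable (PP \<theta>) f"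
    by (subst e) (simp add: integrable_distr_eq BG_vec_def)
  show "integral\<^sup>L (BG_vec \<theta>) (\<lambda>x. f (fst x)) = integral\<^sup>L (PP \<theta>) f"
    by (subst e) (simp add: integral_distr BG_vec_def)
qed

lemma Q_snd:
  fixes f :: "real \<Rightarrow> real"
  assumes th: "0 \<le> \<theta>" "\<theta> \<le> 1" and f[measurable]: "f \<in> borel_measurable borel"
  shows "integrable (BG_vec \<theta> :: (('m::finite \<Rightarrow> real) \<times> real) measure) (\<lambda>x. f (snd x)) \<longleftrightarrow> integrable (BG \<theta>) f"
    "integral\<^sup>L (BG_vec \<theta> :: (('m::finite \<Rightarrow> real) \<times> real) measure) (\<lambda>x. f (snd x)) = integral\<^sup>L (BG \<theta>) f"
proof -
  interpret A: prob_space "PP \<theta> :: ('m::finite \<Rightarrow> real) measure" by (rule PP_prob[OF th])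
  interpret B: prob_space "BG \<theta>" by (rule BG_prob[OF th])
  interpret PS: pair_sigma_finite "PP \<theta> :: ('m::finite \<Rightarrow> real) measure" "BG \<theta>" ..
  have e0: "(PP \<theta> :: ('m::finite \<Rightarrow> real) measure) \<Otimes>\<^sub>M BG \<theta> = distr (BG \<theta> \<Otimes>\<^sub>M PP \<theta>) (PP \<theta> \<Otimes>\<^sub>M BG \<theta>) (\<lambda>(x, y). (y, x))"
    by (rule PS.distr_pair_swap)
  have e1: "BG \<theta> = distr (BG \<theta> \<Otimes>\<^sub>M (PP \<theta> :: ('m::finite \<Rightarrow> real) measure)) (BG \<theta>) fst"
    by (rule A.distr_pair_fst[symmetric])
  let ?sw = "\<lambda>(x::real, y::'m \<Rightarrow> real). (y, x)"
  have m: "?sw \<in> measurable (BG \<theta> \<Otimes>\<^sub>M (PP \<theta> :: ('m::finite \<Rightarrow> real) measure)) ((PP \<theta> :: ('m::finite \<Rightarrow> real) measure) \<Otimes>\<^sub>M BG \<theta>)"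
    by measurable
  have i1: "integrable (BG_vec \<theta> :: (('m::finite \<Rightarrow> real) \<times> real) measure) (\<lambda>x. f (snd x)) \<longleftrightarrow>
      integrable (BG \<theta> \<Otimes>\<^sub>M (PP \<theta> :: ('m::finite \<Rightarrow> real) measure)) (\<lambda>x. f (snd (?sw x)))"
    unfolding BG_vec_def by (subst e0) (rule integrable_distr_eq[OF m], simp)
  have i2: "integrable (BG \<theta> \<Otimes>\<^sub>M (PP \<theta> :: ('m::finite \<Rightarrow> real) measure)) (\<lambda>x. f (snd (?sw x))) \<longleftrightarrow> integrable (BG \<theta>) f"
    by (subst (2) e1) (simp add: integrable_distr_eq case_prod_beta)
  show "integrable (BG_vec \<theta> :: (('m::finite \<Rightarrow> real) \<times> real) measure) (\<lambda>x. f (snd x)) \<longleftrightarrow> integrable (BG \<theta>) f"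
    using i1 i2 by simp
  have j1: "integral\<^sup>L (BG_vec \<theta> :: (('m::finite \<Rightarrow> real) \<times> real) measure) (\<lambda>x. f (snd x)) =
      integral\<^sup>L (BG \<theta> \<Otimes>\<^sub>M (PP \<theta> :: ('m::finite \<Rightarrow> real) measure)) (\<lambda>x. f (snd (?sw x)))"
    unfolding BG_vec_def by (subst e0) (rule integral_distr[OF m], simp)
  have j2: "integral\<^sup>L (BG \<theta> \<Otimes>\<^sub>M (PP \<theta> :: ('m::finite \<Rightarrow> real) measure)) (\<lambda>x. f (snd (?sw x))) = integral\<^sup>L (BG \<theta>) f"
    by (subst (2) e1) (simp add: integral_distr case_prod_beta)
  show "integral\<^sup>L (BG_vec \<theta> :: (('m::finite \<Rightarrow> real) \<times> real) measure) (\<lambda>x. f (snd x)) = integral\<^sup>L (BG \<theta>) f"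
    using j1 j2 by simp
qed

lemma Q_ints:
  assumes th: "0 \<le> \<theta>" "\<theta> \<le> 1"
  shows "integrable (BG_vec \<theta> :: (('m::finite \<Rightarrow> real) \<times> real) measure) (\<lambda>x. \<bar>snd x\<bar>)"
    "integrable (BG_vec \<theta> :: (('m::finite \<Rightarrow> real) \<times> real) measure) (\<lambda>x. (snd x)^2)"
    "integrable (BG_vec \<theta> :: (('m::finite \<Rightarrow> real) \<times> real) measure) (\<lambda>x. \<bar>fst x i\<bar>)"
    "integrable (BG_vec \<theta> :: (('m::finite \<Rightarrow> real) \<times> real) measure) (\<lambda>x. (fst x i)^2)"
    "integral\<^sup>L (BG_vec \<theta> :: (('m::finite \<Rightarrow> real) \<times> real) measure) (\<lambda>x. \<bar>snd x\<bar>) \<le> \<theta>"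
proof -
  show "integrable (BG_vec \<theta> :: (('m::finite \<Rightarrow> real) \<times> real) measure) (\<lambda>x. \<bar>snd x\<bar>)"
    using Q_snd(1)[OF th, of abs] BG_moments(2)[OF th] by simp
  show "integrable (BG_vec \<theta> :: (('m::finite \<Rightarrow> real) \<times> real) measure) (\<lambda>x. (snd x)^2)"
    using Q_snd(1)[OF th, of "\<lambda>y. y^2"] BG_moments(1)[OF th, of 2] by simp
  show "integrable (BG_vec \<theta> :: (('m::finite \<Rightarrow> real) \<times> real) measure) (\<lambda>x. \<bar>fst x i\<bar>)"
    using Q_fst(1)[OF th, of "\<lambda>x. \<bar>x i\<bar>"] PP_comp_integral(1)[OF th, of abs i] BG_moments(2)[OF th] by simp
  show "integrable (BG_vec \<theta> :: (('m::finite \<Rightarrow> real) \<times> real) measure) (\<lambda>x. (fst x i)^2)"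
    using Q_fst(1)[OF th, of "\<lambda>x. (x i)^2"] PP_comp_integral(1)[OF th, of "\<lambda>y. y^2" i] BG_moments(1)[OF th, of 2] by simp
  show "integral\<^sup>L (BG_vec \<theta> :: (('m::finite \<Rightarrow> real) \<times> real) measure) (\<lambda>x. \<bar>snd x\<bar>) \<le> \<theta>"
    using Q_snd(2)[OF th, of abs, where 'm='m] BG_moments(7)[OF th] by simp
qed



lemma r_deriv:
  fixes w :: "real ^ 'm::finite"
  assumes wn: "norm w < 1"
  shows "((\<lambda>v. sqrt (1 - (norm v)^2)) has_derivative (\<lambda>d. - (w \<bullet> d) / sqrt (1 - (norm w)^2))) (at w)"
proof -
  have pos: "0 < 1 - w \<bullet> w" using wn by (simp add: power2_norm_eq_inner[symmetric] abs_square_less_1)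
  have "((\<lambda>v. sqrt (1 - v \<bullet> v)) has_derivative (\<lambda>d. - (w \<bullet> d) / sqrt (1 - w \<bullet> w))) (at w)"
    using pos
    by (auto intro!: derivative_eq_intros simp: inner_commute field_simps)
  then show ?thesis by (simp add: power2_norm_eq_inner)
qed



lemma r_lip:
  fixes v w :: "real ^ 'm::finite"
  assumes wn: "norm w < 1/2" and vn: "norm v \<le> 1"
  shows "\<bar>sqrt (1 - (norm v)^2) - sqrt (1 - (norm w)^2)\<bar> \<le> 2 * norm (v - w)"
proof -
  define A where "A = 1 - (norm v)^2"
  define B where "B = 1 - (norm w)^2"
  have A0: "0 \<le> A" unfolding A_def using vn by (simp add: abs_le_square_iff power_le_one)
  have "(norm w)^2 < (1/2)^2" using wn by (intro power_strict_mono) auto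
  then have B0: "3/4 \<le> B" unfolding B_def by (simp add: power_divide)
  have sB: "3/4 \<le> sqrt B" using B0 by (intro real_le_rsqrt) (auto simp: power2_eq_square)
  have sA: "0 \<le> sqrt A" using A0 by simp
  have prod: "(sqrt A - sqrt B) * (sqrt A + sqrt B) = A - B"
    using A0 B0 by (simp add: algebra_simps)
  have s34: "3/4 \<le> sqrt A + sqrt B" using sA sB by linarith
  have "\<bar>sqrt A - sqrt B\<bar> * (3/4) \<le> \<bar>sqrt A - sqrt B\<bar> * (sqrt A + sqrt B)"
    using s34 by (intro mult_left_mono) auto
  also have "\<dots> = \<bar>A - B\<bar>" unfolding prod[symmetric] abs_mult using s34 by simp
  also have "\<bar>A - B\<bar> = \<bar>norm w - norm v\<bar> * (norm w + norm v)"
  proof -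
    have "A - B = (norm w - norm v) * (norm w + norm v)" unfolding A_def B_def by (simp add: power2_eq_square algebra_simps)
    then show ?thesis by (simp add: abs_mult)
  qed
  also have "\<dots> \<le> norm (v - w) * (3/2)"
  proof (intro mult_mono)
    show "\<bar>norm w - norm v\<bar> \<le> norm (v - w)" by (metis norm_minus_commute norm_triangle_ineq3)
  qed (use wn vn in auto)
  finally show ?thesis unfolding A_def B_def by simp
qed

lemma pt_bound:
  fixes a b S D y c n Q \<mu> :: real
  assumes mu: "0 < \<mu>" and b: "b = a + S + D * y" and D: "\<bar>D\<bar> \<le> 2 * n" and S: "S^2 \<le> n^2 * Q"
  shows "\<bar>hmu \<mu> b - hmu \<mu> a - tanh (a/\<mu>) * (S - c * y)\<bar> \<le> n^2 * (2 * Q + 8 * y^2) / \<mu> + \<bar>D + c\<bar> * \<bar>y\<bar>"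
proof -
  have n0: "0 \<le> n" using D by linarith
  have t: "\<bar>hmu \<mu> b - hmu \<mu> a - tanh (a/\<mu>) * (b - a)\<bar> \<le> (b - a)^2 / \<mu>" by (rule hmu_taylor[OF mu])
  have sq: "(b - a)^2 \<le> n^2 * (2 * Q + 8 * y^2)"
  proof -
    have "(b - a)^2 = (S + D*y)^2" using b by simp
    also have "\<dots> \<le> 2 * S^2 + 2 * (D*y)^2"
    proof -
      have "0 \<le> (S - D*y)^2" by simp
      then show ?thesis unfolding power2_diff power2_sum by linarith
    qed
    also have "(D*y)^2 \<le> (2*n)^2 * y^2" unfolding power_mult_distrib
      using power_mono[OF D abs_ge_zero, of 2] by (intro mult_right_mono) auto
    then have "2 * S^2 + 2 * (D*y)^2 \<le> 2 * (n^2 * Q) + 2 * ((2*n)^2 * y^2)" using S by linarith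
    also have "\<dots> = n^2 * (2 * Q + 8 * y^2)" by (simp add: power_mult_distrib algebra_simps)
    finally show ?thesis .
  qed
  have e: "hmu \<mu> b - hmu \<mu> a - tanh (a/\<mu>) * (S - c * y) = (hmu \<mu> b - hmu \<mu> a - tanh (a/\<mu>) * (b - a)) + tanh (a/\<mu>) * (D + c) * y"
    using b by (simp add: algebra_simps)
  have "\<bar>tanh (a/\<mu>) * (D + c) * y\<bar> \<le> \<bar>D + c\<bar> * \<bar>y\<bar>"
    using abs_tanh_le1[of "a/\<mu>"] by (simp add: abs_mult mult_left_le_one_le mult.assoc)
  moreover have "(b - a)^2 / \<mu> \<le> n^2 * (2 * Q + 8 * y^2) / \<mu>" using sq mu by (simp add: divide_right_mono)
  ultimately show ?thesis unfolding e using t by linarith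
qed



lemma norm_sq_vec: "(norm (d :: real ^ 'm::finite))^2 = (\<Sum>i\<in>UNIV. (d$i)^2)"
  by (simp only: power2_norm_eq_inner inner_vec_def) (simp add: power2_eq_square)

lemma qdot_meas[measurable]:
  "(\<lambda>x. qdot v x) \<in> borel_measurable (BG_vec \<theta> :: (('m::finite \<Rightarrow> real) \<times> real) measure)"
  unfolding qdot_def by measurable

lemma objective_has_deriv:
  fixes w :: "real ^ 'm::finite" and \<theta> \<mu> :: real
  assumes th: "0 \<le> \<theta>" "\<theta> \<le> 1" and mu: "0 < \<mu>" and wn: "norm w < 1/2"
  shows "(objective \<theta> \<mu> has_derivative
     (\<lambda>d. (\<Sum>i\<in>UNIV. d$i * (\<integral>x. tanh (qdot w x / \<mu>) * fst x i \<partial>BG_vec \<theta>)) -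
          (w \<bullet> d) / sqrt (1 - (norm w)^2) * (\<integral>x. tanh (qdot w x / \<mu>) * snd x \<partial>BG_vec \<theta>))) (at w)"
proof -
  let ?Q = "BG_vec \<theta> :: (('m \<Rightarrow> real) \<times> real) measure"
  interpret Q: prob_space ?Q by (rule BG_vec_prob[OF th])
  define r where "r v = sqrt (1 - (norm v)^2)" for v :: "real^'m"
  define t where "t x = tanh (qdot w x / \<mu>)" for x :: "('m \<Rightarrow> real) \<times> real"
  define a where "a i = (\<integral>x. t x * fst x i \<partial>?Q)" for i
  define b where "b = (\<integral>x. t x * snd x \<partial>?Q)"
  define D where "D d = (\<Sum>i\<in>UNIV. d$i * a i) - (w \<bullet> d) / r w * b" for d
  have qd: "qdot v x = (\<Sum>i\<in>UNIV. v$i * fst x i) + r v * snd x" for v x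
    unfolding qdot_def r_def ..
  have t_meas[measurable]: "t \<in> borel_measurable ?Q" unfolding t_def by measurable
  have ift: "integrable ?Q (\<lambda>x. t x * fst x i)" for i
    by (rule Bochner_Integration.integrable_bound[OF Q_ints(3)[OF th, of i]])
       (auto simp: abs_mult t_def intro!: mult_left_le_one_le abs_tanh_le1)
  have its: "integrable ?Q (\<lambda>x. t x * snd x)"
    by (rule Bochner_Integration.integrable_bound[OF Q_ints(1)[OF th]])
       (auto simp: abs_mult t_def intro!: mult_left_le_one_le abs_tanh_le1)
  have ih: "integrable ?Q (\<lambda>x. hmu \<mu> (qdot v x))" for v
  proof (rule Bochner_Integration.integrable_bound)
    show "integrable ?Q (\<lambda>x. (\<Sum>i\<in>UNIV. \<bar>v$i\<bar> * \<bar>fst x i\<bar>) + \<bar>r v\<bar> * \<bar>snd x\<bar>)"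
      using Q_ints(1,3)[OF th, where 'm='m] by (auto intro!: Bochner_Integration.integrable_add Bochner_Integration.integrable_sum)
    show "AE x in ?Q. norm (hmu \<mu> (qdot v x)) \<le> norm ((\<Sum>i\<in>UNIV. \<bar>v$i\<bar> * \<bar>fst x i\<bar>) + \<bar>r v\<bar> * \<bar>snd x\<bar>)"
    proof (intro AE_I2)
      fix x :: "('m \<Rightarrow> real) \<times> real"
      have "\<bar>hmu \<mu> (qdot v x)\<bar> \<le> \<bar>qdot v x\<bar>" using hmu_bounds[OF mu, of "qdot v x"] by simp
      also have "\<dots> \<le> \<bar>\<Sum>i\<in>UNIV. v$i * fst x i\<bar> + \<bar>r v * snd x\<bar>" unfolding qd by (rule abs_triangle_ineq)
      also have "\<bar>\<Sum>i\<in>UNIV. v$i * fst x i\<bar> \<le> (\<Sum>i\<in>UNIV. \<bar>v$i\<bar> * \<bar>fst x i\<bar>)"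
        by (rule order.trans[OF sum_abs]) (simp add: abs_mult)
      finally have "\<bar>hmu \<mu> (qdot v x)\<bar> \<le> (\<Sum>i\<in>UNIV. \<bar>v$i\<bar> * \<bar>fst x i\<bar>) + \<bar>r v\<bar> * \<bar>snd x\<bar>"
        by (simp add: abs_mult)
      then show "norm (hmu \<mu> (qdot v x)) \<le> norm ((\<Sum>i\<in>UNIV. \<bar>v$i\<bar> * \<bar>fst x i\<bar>) + \<bar>r v\<bar> * \<bar>snd x\<bar>)"
        by (smt (verit, best) real_norm_def)
    qed
  qed measurable
  have blin: "bounded_linear D"
  proof -
    have "D = (\<lambda>d. (\<Sum>i\<in>UNIV. d$i * a i) - (w \<bullet> d) * (b / r w))" by (auto simp: D_def fun_eq_iff)
    then show ?thesis
      by (simp only:) (intro bounded_linear_sub bounded_linear_sum bounded_linear_mult_const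
          bounded_linear_vec_nth bounded_linear_inner_right)
  qed
  have diff_eq: "objective \<theta> \<mu> v - objective \<theta> \<mu> w - D (v - w) =
     (\<integral>x. hmu \<mu> (qdot v x) - hmu \<mu> (qdot w x) - t x * ((\<Sum>i\<in>UNIV. (v-w)$i * fst x i) - (w \<bullet> (v-w)) / r w * snd x) \<partial>?Q)" for v
  proof -
    have e: "(\<lambda>x. hmu \<mu> (qdot v x) - hmu \<mu> (qdot w x) - t x * ((\<Sum>i\<in>UNIV. (v-w)$i * fst x i) - (w \<bullet> (v-w)) / r w * snd x))
       = (\<lambda>x. hmu \<mu> (qdot v x) - hmu \<mu> (qdot w x) - (\<Sum>i\<in>UNIV. (v-w)$i * (t x * fst x i)) + ((w \<bullet> (v-w)) / r w) * (t x * snd x))"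
      by (auto simp: algebra_simps sum_distrib_left)
    have i1: "integrable ?Q (\<lambda>x. \<Sum>i\<in>UNIV. (v-w)$i * (t x * fst x i))"
      using ift by auto
    show ?thesis
      unfolding e objective_def D_def a_def b_def
      using ih[of v] ih[of w] i1 its ift
      by (simp add: Bochner_Integration.integral_sum integral_mult_right_zero)
  qed
  define K where "K = (\<integral>x. 2 * (\<Sum>i\<in>UNIV. (fst x i)^2) + 8 * (snd x)^2 \<partial>?Q)"
  define K3 where "K3 = (\<integral>x. \<bar>snd x\<bar> \<partial>?Q)"
  define e where "e v = r v - r w + (w \<bullet> (v - w)) / r w" for v
  have bound: "\<bar>objective \<theta> \<mu> v - objective \<theta> \<mu> w - D (v - w)\<bar> \<le> (norm (v - w))^2 * K / \<mu> + \<bar>e v\<bar> * K3"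
    if vn: "norm v \<le> 1" for v
  proof -
    let ?n = "norm (v - w)"
    let ?I = "\<lambda>x. hmu \<mu> (qdot v x) - hmu \<mu> (qdot w x) - t x * ((\<Sum>i\<in>UNIV. (v-w)$i * fst x i) - (w \<bullet> (v-w)) / r w * snd x)"
    let ?B = "\<lambda>x. ?n^2 * (2 * (\<Sum>i\<in>UNIV. (fst x i)^2) + 8 * (snd x)^2) / \<mu> + \<bar>e v\<bar> * \<bar>snd x\<bar>"
    have pb: "\<bar>?I x\<bar> \<le> ?B x" for x
    proof -
      have "\<bar>?I x\<bar> \<le> ?n^2 * (2 * (\<Sum>i\<in>UNIV. (fst x i)^2) + 8 * (snd x)^2) / \<mu> + \<bar>(r v - r w) + (w \<bullet> (v-w)) / r w\<bar> * \<bar>snd x\<bar>"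
        unfolding t_def
      proof (rule pt_bound[OF mu])
        show "qdot v x = qdot w x + (\<Sum>i\<in>UNIV. (v-w)$i * fst x i) + (r v - r w) * snd x"
          unfolding qd by (simp add: algebra_simps sum.distrib[symmetric])
        show "\<bar>r v - r w\<bar> \<le> 2 * ?n" unfolding r_def by (rule r_lip[OF wn vn])
        show "(\<Sum>i\<in>UNIV. (v-w)$i * fst x i)^2 \<le> ?n^2 * (\<Sum>i\<in>UNIV. (fst x i)^2)"
          unfolding norm_sq_vec by (rule Cauchy_Schwarz_ineq_sum)
      qed
      then show ?thesis unfolding e_def by simp
    qed
    have iB: "integrable ?Q ?B"
      using Q_ints[OF th, where 'm='m] by (intro Bochner_Integration.integrable_add integrable_mult_right integrable_divide Bochner_Integration.integrable_sum) auto
    have iI: "integrable ?Q ?I"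
      by (rule Bochner_Integration.integrable_bound[OF iB]) (use pb in \<open>auto intro!: AE_I2 order.trans[OF _ abs_ge_self]\<close>)
    have "\<bar>objective \<theta> \<mu> v - objective \<theta> \<mu> w - D (v - w)\<bar> = \<bar>\<integral>x. ?I x \<partial>?Q\<bar>"
      unfolding diff_eq ..
    also have "\<dots> \<le> (\<integral>x. \<bar>?I x\<bar> \<partial>?Q)" by (rule integral_abs_bound)
    also have "\<dots> \<le> (\<integral>x. ?B x \<partial>?Q)" using iI iB pb by (intro integral_mono) auto
    also have "\<dots> = ?n^2 * K / \<mu> + \<bar>e v\<bar> * K3"
      unfolding K_def K3_def using Q_ints[OF th, where 'm='m]
      by (simp add: Bochner_Integration.integral_add Bochner_Integration.integral_mult_right Bochner_Integration.integral_divide Bochner_Integration.integral_sum)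
    finally show ?thesis .
  qed
  have e_lim: "((\<lambda>v. \<bar>e v\<bar> / norm (v - w)) \<longlongrightarrow> 0) (at w)"
  proof -
    have "(r has_derivative (\<lambda>d. - (w \<bullet> d) / r w)) (at w)"
      unfolding r_def using r_deriv[of w] wn by simp
    then show ?thesis unfolding has_derivative_iff_norm e_def by (simp add: diff_minus_eq_add)
  qed
  have n_lim: "((\<lambda>v. norm (v - w)) \<longlongrightarrow> 0) (at w)"
    by (intro tendsto_eq_intros) auto
  have g_lim: "((\<lambda>v. norm (v - w) * K / \<mu> + \<bar>e v\<bar> / norm (v - w) * K3) \<longlongrightarrow> 0) (at w)"
  proof -
    have 1: "((\<lambda>v. norm (v - w) * K / \<mu>) \<longlongrightarrow> 0 * K / \<mu>) (at w)"
      by (intro tendsto_divide tendsto_mult n_lim tendsto_const) (use mu in auto)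
    have 2: "((\<lambda>v. \<bar>e v\<bar> / norm (v - w) * K3) \<longlongrightarrow> 0 * K3) (at w)"
      by (intro tendsto_mult e_lim tendsto_const)
    show ?thesis using tendsto_add[OF 1 2] by simp
  qed
  have ev: "eventually (\<lambda>v. norm v \<le> 1 \<and> v \<noteq> w) (at w)"
  proof -
    have "norm v \<le> 1 \<and> v \<noteq> w" if v: "v \<noteq> w" "dist v w < 1/2" for v
    proof -
      have "norm v \<le> norm w + dist v w"
        by (metis dist_norm norm_triangle_sub)
      with v wn show ?thesis by auto
    qed
    then show ?thesis unfolding eventually_at by (intro exI[of _ "1/2"]) auto
  qed
  have lim: "((\<lambda>v. norm (objective \<theta> \<mu> v - objective \<theta> \<mu> w - D (v - w)) / norm (v - w)) \<longlongrightarrow> 0) (at w)"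
  proof (rule real_tendsto_sandwich[OF _ _ tendsto_const g_lim])
    show "eventually (\<lambda>v. 0 \<le> norm (objective \<theta> \<mu> v - objective \<theta> \<mu> w - D (v - w)) / norm (v - w)) (at w)"
      by auto
    show "eventually (\<lambda>v. norm (objective \<theta> \<mu> v - objective \<theta> \<mu> w - D (v - w)) / norm (v - w)
        \<le> norm (v - w) * K / \<mu> + \<bar>e v\<bar> / norm (v - w) * K3) (at w)"
      using ev
    proof eventually_elim
      case (elim v)
      then have np: "0 < norm (v - w)" by auto
      have "norm (objective \<theta> \<mu> v - objective \<theta> \<mu> w - D (v - w)) / norm (v - w)
          \<le> ((norm (v - w))^2 * K / \<mu> + \<bar>e v\<bar> * K3) / norm (v - w)"
        using bound[of v] elim np by (intro divide_right_mono) auto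
      also have "\<dots> = norm (v - w) * K / \<mu> + \<bar>e v\<bar> / norm (v - w) * K3"
        using np by (simp add: field_simps power2_eq_square)
      finally show ?case .
    qed
  qed
  have "(objective \<theta> \<mu> has_derivative D) (at w)"
    unfolding has_derivative_iff_norm using blin lim by auto
  then show ?thesis unfolding D_def a_def b_def t_def r_def .
qed



lemma std_normal_sym: "std_normal_density (- x) = std_normal_density x"
  by (simp add: std_normal_density_def)

lemma NN_sym:
  fixes f :: "real \<Rightarrow> real"
  assumes f[measurable]: "f \<in> borel_measurable borel"
  shows "integral\<^sup>L NN (\<lambda>g. f (- g)) = integral\<^sup>L NN f"
proof -
  have "integral\<^sup>L NN (\<lambda>g. f (- g)) = (\<integral>x. std_normal_density x * f (- x) \<partial>lborel)"
    by (rule NN_integral) measurable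
  also have "\<dots> = (\<integral>x. std_normal_density (0 + (-1) * x) * f (- (0 + (-1) * x)) \<partial>lborel)"
    using lborel_integral_real_affine[of "-1" "\<lambda>x. std_normal_density x * f (- x)" 0] by simp
  also have "\<dots> = (\<integral>x. std_normal_density x * f x \<partial>lborel)" by (simp add: std_normal_sym)
  also have "\<dots> = integral\<^sup>L NN f" by (rule NN_integral[symmetric]) measurable
  finally show ?thesis .
qed

lemma psi_nonneg:
  fixes X r \<mu> :: real
  assumes mu: "0 < \<mu>"
  shows "0 \<le> (\<integral>g. tanh ((X + r * g) / \<mu>) * X \<partial>NN)"
proof -
  interpret N: prob_space NN by (rule prob_NN)
  define psi where "psi u = (\<integral>g. tanh ((u + r * g) / \<mu>) \<partial>NN)" for u
  have int: "integrable NN (\<lambda>g. tanh ((u + r * g) / \<mu>))" for u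
    by (rule Bochner_Integration.integrable_bound[of _ "\<lambda>_. 1::real"]) (auto intro: abs_tanh_le1)
  have odd: "psi (- u) = - psi u" for u
  proof -
    have "psi (- u) = (\<integral>g. tanh ((- u + r * (- g)) / \<mu>) \<partial>NN)"
      unfolding psi_def
      by (rule NN_sym[of "\<lambda>g. tanh ((- u + r * g) / \<mu>)", symmetric]) measurable
    also have "\<dots> = (\<integral>g. - tanh ((u + r * g) / \<mu>) \<partial>NN)"
      by (intro Bochner_Integration.integral_cong refl) (metis tanh_minus minus_divide_left minus_add_distrib mult_minus_right)
    also have "\<dots> = - psi u" unfolding psi_def by simp
    finally show ?thesis .
  qed
  have mono: "psi (- u) \<le> psi u" if "0 \<le> u" for u
    unfolding psi_def using int[of u] int[of "-u"] that mu
    by (intro integral_mono) (auto simp: divide_right_mono)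
  have "0 \<le> X * psi X"
  proof (cases "0 \<le> X")
    case True
    then show ?thesis using mono[OF True] odd[of X] by simp
  next
    case False
    then have "psi X \<le> psi (- X)" using mono[of "- X"] by simp
    then have "psi X \<le> 0" using odd[of X] by simp
    then show ?thesis using False by (simp add: mult_nonpos_nonpos)
  qed
  also have "X * psi X = (\<integral>g. tanh ((X + r * g) / \<mu>) * X \<partial>NN)"
    unfolding psi_def by (simp add: mult.commute)
  finally show ?thesis .
qed



lemma Dw_lower:
  fixes w :: "real ^ 'm::finite" and \<theta> \<mu> m :: real
  assumes th: "0 \<le> \<theta>" "\<theta> \<le> 1" and mu: "0 < \<mu>" and wn: "norm w < 1/2" and m: "\<mu> \<le> m"
  shows "(1 - \<theta>) * (\<theta> * (norm w)^2 / m - \<theta> * (norm w)^4 / m^3) - (norm w)^2 / sqrt (1 - (norm w)^2) * \<theta>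
     \<le> (\<Sum>i\<in>UNIV. w$i * (\<integral>x. tanh (qdot w x / \<mu>) * fst x i \<partial>BG_vec \<theta>)) -
          (w \<bullet> w) / sqrt (1 - (norm w)^2) * (\<integral>x. tanh (qdot w x / \<mu>) * snd x \<partial>BG_vec \<theta>)"
proof -
  let ?Q = "BG_vec \<theta> :: (('m \<Rightarrow> real) \<times> real) measure"
  let ?P = "PP \<theta> :: ('m \<Rightarrow> real) measure"
  interpret Q: prob_space ?Q by (rule BG_vec_prob[OF th])
  interpret P: prob_space ?P by (rule PP_prob[OF th])
  interpret B: prob_space "BG \<theta>" by (rule BG_prob[OF th])
  interpret N: prob_space NN by (rule prob_NN)
  interpret PB: pair_sigma_finite ?P "BG \<theta>" ..
  define r where "r = sqrt (1 - (norm w)^2)"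
  define s where "s = norm w"
  define X where "X \<xi> = (\<Sum>i\<in>UNIV. w$i * \<xi> i)" for \<xi> :: "'m \<Rightarrow> real"
  define t where "t x = tanh (qdot w x / \<mu>)" for x :: "('m \<Rightarrow> real) \<times> real"
  have mpos: "0 < m" using mu m by linarith
  have r0: "0 < r" unfolding r_def using wn
    by (simp add: abs_square_less_1 order_le_less_trans[OF _ wn])
  have qd: "qdot w x = X (fst x) + r * snd x" for x unfolding qdot_def X_def r_def ..
  have X_meas[measurable]: "X \<in> borel_measurable ?P" unfolding X_def by measurable
  have t_meas[measurable]: "t \<in> borel_measurable ?Q" unfolding t_def by measurable
  have iabsP: "integrable ?P (\<lambda>\<xi>. \<bar>\<xi> i\<bar>)" for i
    using PP_comp_integral(1)[OF th, of abs i] BG_moments(2)[OF th] by simp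
  have iXb: "integrable ?P (\<lambda>\<xi>. \<Sum>i\<in>UNIV. \<bar>w$i\<bar> * \<bar>\<xi> i\<bar>)"
    using iabsP by (intro Bochner_Integration.integrable_sum) auto
  have Xb: "\<bar>X \<xi>\<bar> \<le> (\<Sum>i\<in>UNIV. \<bar>w$i\<bar> * \<bar>\<xi> i\<bar>)" for \<xi>
    unfolding X_def by (rule order.trans[OF sum_abs]) (simp add: abs_mult)
  have ift: "integrable ?Q (\<lambda>x. t x * fst x i)" for i
    by (rule Bochner_Integration.integrable_bound[OF Q_ints(3)[OF th, of i]])
       (auto simp: abs_mult t_def intro!: mult_left_le_one_le abs_tanh_le1)
  have s1: "(\<Sum>i\<in>UNIV. w$i * (\<integral>x. t x * fst x i \<partial>?Q)) = (\<integral>x. t x * X (fst x) \<partial>?Q)"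
  proof -
    have "(\<Sum>i\<in>UNIV. w$i * (\<integral>x. t x * fst x i \<partial>?Q)) = (\<integral>x. (\<Sum>i\<in>UNIV. w$i * (t x * fst x i)) \<partial>?Q)"
      using ift by (simp add: Bochner_Integration.integral_sum)
    also have "\<dots> = (\<integral>x. t x * X (fst x) \<partial>?Q)"
      unfolding X_def by (simp add: sum_distrib_left algebra_simps)
    finally show ?thesis .
  qed
  define f where "f = (\<lambda>(\<xi>, y). tanh ((X \<xi> + r * y) / \<mu>) * X \<xi>)"
  have f_meas[measurable]: "f \<in> borel_measurable (?P \<Otimes>\<^sub>M BG \<theta>)" unfolding f_def by measurable
  have tX: "t x * X (fst x) = f x" for x unfolding f_def t_def qd by (simp add: case_prod_beta)
  have fint: "integrable (?P \<Otimes>\<^sub>M BG \<theta>) f"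
  proof (rule Bochner_Integration.integrable_bound)
    show "integrable (?P \<Otimes>\<^sub>M BG \<theta>) (\<lambda>x. \<Sum>i\<in>UNIV. \<bar>w$i\<bar> * \<bar>fst x i\<bar>)"
      using Q_fst(1)[OF th, of "\<lambda>\<xi>. \<Sum>i\<in>UNIV. \<bar>w$i\<bar> * \<bar>\<xi> i\<bar>"] iXb by (simp add: BG_vec_def)
    show "AE x in ?P \<Otimes>\<^sub>M BG \<theta>. norm (f x) \<le> norm (\<Sum>i\<in>UNIV. \<bar>w$i\<bar> * \<bar>fst x i\<bar>)"
    proof (intro AE_I2)
      fix x :: "('m \<Rightarrow> real) \<times> real"
      have "\<bar>f x\<bar> \<le> \<bar>X (fst x)\<bar>" unfolding f_def
        by (auto simp: abs_mult case_prod_beta intro!: mult_left_le_one_le abs_tanh_le1)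
      then show "norm (f x) \<le> norm (\<Sum>i\<in>UNIV. \<bar>w$i\<bar> * \<bar>fst x i\<bar>)"
        using Xb[of "fst x"] by simp
    qed
  qed simp
  have s2: "(\<integral>x. t x * X (fst x) \<partial>?Q) = (\<integral>\<xi>. (\<integral>y. f (\<xi>, y) \<partial>BG \<theta>) \<partial>?P)"
    unfolding tX BG_vec_def using PB.integral_fst'[OF fint] by simp
  have s3: "(1 - \<theta>) * (tanh (X \<xi> / \<mu>) * X \<xi>) \<le> (\<integral>y. f (\<xi>, y) \<partial>BG \<theta>)" for \<xi>
  proof -
    let ?g = "\<lambda>y. tanh ((X \<xi> + r * y) / \<mu>) * X \<xi>"
    have gi: "integrable NN ?g"
      by (rule Bochner_Integration.integrable_bound[of _ "\<lambda>_. \<bar>X \<xi>\<bar>"])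
         (auto simp: abs_mult intro!: mult_left_le_one_le abs_tanh_le1)
    have "(\<integral>y. f (\<xi>, y) \<partial>BG \<theta>) = integral\<^sup>L (BG \<theta>) ?g"
      by (simp only: f_def case_prod_conv)
    also have "\<dots> = (1 - \<theta>) * ?g 0 + \<theta> * integral\<^sup>L NN ?g"
      by (rule BG_integral(2)[OF th _ gi]) measurable
    moreover have "0 \<le> \<theta> * integral\<^sup>L NN ?g" using psi_nonneg[OF mu] th by simp
    ultimately show ?thesis by simp
  qed
  have iX2: "integrable ?P (\<lambda>\<xi>. X \<xi> ^ k)" for k
    using PP_sum_moments[OF th, of "\<lambda>i. w$i" UNIV] unfolding X_def by blast
  have itX: "integrable ?P (\<lambda>\<xi>. tanh (X \<xi> / \<mu>) * X \<xi>)"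
    by (rule Bochner_Integration.integrable_bound[OF iX2[of 1]])
       (auto simp: abs_mult intro!: mult_left_le_one_le abs_tanh_le1)
  have s4: "(1 - \<theta>) * (\<integral>\<xi>. tanh (X \<xi> / \<mu>) * X \<xi> \<partial>?P) \<le> (\<integral>\<xi>. (\<integral>y. f (\<xi>, y) \<partial>BG \<theta>) \<partial>?P)"
  proof -
    have "(1 - \<theta>) * (\<integral>\<xi>. tanh (X \<xi> / \<mu>) * X \<xi> \<partial>?P) = (\<integral>\<xi>. (1 - \<theta>) * (tanh (X \<xi> / \<mu>) * X \<xi>) \<partial>?P)"
      by simp
    also have "\<dots> \<le> (\<integral>\<xi>. (\<integral>y. f (\<xi>, y) \<partial>BG \<theta>) \<partial>?P)"
      using s3 itX PB.integrable_fst'[OF fint] by (intro integral_mono) auto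
    finally show ?thesis .
  qed
  have mom: "(\<integral>\<xi>. X \<xi> ^ 2 \<partial>?P) = \<theta> * s^2" "(\<integral>\<xi>. X \<xi> ^ 4 \<partial>?P) \<le> 3 * \<theta> * (s^2)^2"
    using PP_sum_moments[OF th, of "\<lambda>i. w$i" UNIV]
    unfolding X_def s_def norm_sq_vec by auto
  have s5: "\<theta> * s^2 / m - \<theta> * s^4 / m^3 \<le> (\<integral>\<xi>. tanh (X \<xi> / \<mu>) * X \<xi> \<partial>?P)"
  proof -
    have "(\<integral>\<xi>. X \<xi> ^ 2 / m - X \<xi> ^ 4 / (3 * m^3) \<partial>?P) \<le> (\<integral>\<xi>. tanh (X \<xi> / \<mu>) * X \<xi> \<partial>?P)"
      using iX2 itX xtanh_lower[OF mu m] by (intro integral_mono) (auto simp: mult.commute)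
    moreover have "(\<integral>\<xi>. X \<xi> ^ 2 / m - X \<xi> ^ 4 / (3 * m^3) \<partial>?P) = (\<integral>\<xi>. X \<xi> ^ 2 \<partial>?P) / m - (\<integral>\<xi>. X \<xi> ^ 4 \<partial>?P) / (3 * m^3)"
      using iX2 by simp
    moreover have "(\<integral>\<xi>. X \<xi> ^ 4 \<partial>?P) / (3 * m^3) \<le> (3 * \<theta> * (s^2)^2) / (3 * m^3)"
      using mom(2) mpos by (intro divide_right_mono) auto
    ultimately show ?thesis using mom(1) by (simp add: power_mult[symmetric])
  qed
  have s6: "(\<integral>x. t x * snd x \<partial>?Q) \<le> \<theta>"
  proof -
    have its: "integrable ?Q (\<lambda>x. t x * snd x)"
      by (rule Bochner_Integration.integrable_bound[OF Q_ints(1)[OF th, where 'm='m]])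
         (auto simp: abs_mult t_def intro!: mult_left_le_one_le abs_tanh_le1)
    have "(\<integral>x. t x * snd x \<partial>?Q) \<le> (\<integral>x. \<bar>snd x\<bar> \<partial>?Q)"
      using its Q_ints(1)[OF th, where 'm='m]
    proof (intro integral_mono)
      fix x :: "('m \<Rightarrow> real) \<times> real"
      have "t x * snd x \<le> \<bar>t x * snd x\<bar>" by simp
      also have "\<dots> \<le> \<bar>snd x\<bar>" unfolding t_def
        by (auto simp: abs_mult intro!: mult_left_le_one_le abs_tanh_le1)
      finally show "t x * snd x \<le> \<bar>snd x\<bar>" .
    qed
    also have "\<dots> \<le> \<theta>" by (rule Q_ints(5)[OF th])
    finally show ?thesis .
  qed
  have ww: "w \<bullet> w = s^2" unfolding s_def by (simp add: power2_norm_eq_inner)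
  have c0: "0 \<le> s^2 / r" using r0 by simp
  have "(1 - \<theta>) * (\<theta> * s^2 / m - \<theta> * s^4 / m^3) \<le> (\<Sum>i\<in>UNIV. w$i * (\<integral>x. t x * fst x i \<partial>?Q))"
    using s1 s2 s4 s5 th by (smt (verit) mult_left_mono)
  moreover have "s^2 / r * (\<integral>x. t x * snd x \<partial>?Q) \<le> s^2 / r * \<theta>"
    using s6 c0 by (rule mult_left_mono)
  moreover have e1: "sqrt (1 - s^2) = r" by (simp add: r_def s_def)
  ultimately show ?thesis unfolding t_def[symmetric] ww s_def[symmetric] e1 by linarith
qed



theorem mainTheorem6:
  fixes w :: "real ^ 'm" and \<theta> \<mu> :: real
  assumes "0 < \<theta>" and "\<theta> < 1/2"
    and "0 < \<mu>" and "\<mu> \<le> 9/50"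
    and "\<mu> / (4 * sqrt 2) \<le> norm w" and "norm w \<le> 1 / (20 * sqrt 5)"
  shows "\<exists>D. (objective \<theta> \<mu> has_derivative D) (at w) \<and>
             D w / norm w \<ge> \<theta> / (20 * sqrt (2 * pi))"
proof -
  have th: "0 \<le> \<theta>" "\<theta> \<le> 1" using assms(1,2) by auto
  have mu: "0 < \<mu>" by fact
  define s where "s = norm w"
  define k where "k = 4 * sqrt 2"
  define r where "r = sqrt (1 - s^2)"
  have s2: "sqrt 2 \<le> 1.42"
  proof -
    have "sqrt 2 \<le> sqrt (1.42^2)" by (rule real_sqrt_le_mono) (simp add: power2_eq_square)
    then show ?thesis by (simp only: real_sqrt_abs) simp
  qed
  have s2': "1.41 \<le> sqrt 2" by (rule real_le_rsqrt) (simp add: power2_eq_square)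
  have s5: "2.2 \<le> sqrt 5" by (rule real_le_rsqrt) (simp add: power2_eq_square)
  have spi: "2.4 \<le> sqrt (2 * pi)" by (rule real_le_rsqrt) (use pi_gt3 in \<open>simp add: power2_eq_square\<close>)
  have kpos: "0 < k" unfolding k_def by simp
  have spos: "0 < s" unfolding s_def using assms(3,5) kpos by (smt (verit) divide_pos_pos k_def)
  have sub: "s \<le> 1/44"
  proof -
    have "s \<le> 1 / (20 * sqrt 5)" using assms(6) s_def by simp
    also have "\<dots> \<le> 1 / (20 * 2.2)" using s5 by (intro divide_left_mono) auto
    finally show ?thesis by simp
  qed
  have wn: "norm w < 1/2" using sub s_def by simp
  have mk: "\<mu> \<le> k * s" using assms(5) kpos unfolding k_def s_def by (simp add: field_simps)
  have s2sq: "s^2 \<le> 1/1936" using power_mono[OF sub less_imp_le[OF spos], of 2] by (simp add: power_divide)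
  have r99: "0.99 \<le> r" unfolding r_def by (rule real_le_rsqrt) (use s2sq in \<open>simp add: power2_eq_square\<close>)
  obtain D where D: "(objective \<theta> \<mu> has_derivative D) (at w)"
     "D = (\<lambda>d. (\<Sum>i\<in>UNIV. d$i * (\<integral>x. tanh (qdot w x / \<mu>) * fst x i \<partial>BG_vec \<theta>)) -
          (w \<bullet> d) / sqrt (1 - (norm w)^2) * (\<integral>x. tanh (qdot w x / \<mu>) * snd x \<partial>BG_vec \<theta>))"
    using objective_has_deriv[OF th mu wn] by blast
  have low: "(1 - \<theta>) * (\<theta> * s^2 / (k * s) - \<theta> * s^4 / (k * s)^3) - s^2 / r * \<theta> \<le> D w"
    unfolding D(2) s_def r_def using Dw_lower[OF th mu wn mk[unfolded s_def]] by simp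
  have k2: "k^2 = 32" unfolding k_def by (simp add: power_mult_distrib)
  have eq: "(1 - \<theta>) * (\<theta> * s^2 / (k * s) - \<theta> * s^4 / (k * s)^3) - s^2 / r * \<theta>
      = s * \<theta> * ((1 - \<theta>) * (31 / k^3) - s / r)"
  proof -
    have "\<theta> * s^2 / (k * s) - \<theta> * s^4 / (k * s)^3 = s * \<theta> * ((k^2 - 1) / k^3)"
      using spos kpos by (simp add: field_simps power2_eq_square power3_eq_cube power4_eq_xxxx)
    also have "\<dots> = s * \<theta> * (31 / k^3)" using k2 by simp
    finally have a: "\<theta> * s^2 / (k * s) - \<theta> * s^4 / (k * s)^3 = s * \<theta> * (31 / k^3)" .
    show ?thesis unfolding a by (simp add: algebra_simps power2_eq_square)
  qed
  have k3: "k^3 = 128 * sqrt 2" unfolding k_def by (simp add: power3_eq_cube)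
  have c1: "17/100 \<le> 31 / k^3" unfolding k3 using s2 by (simp add: field_simps)
  have c2: "s / r \<le> 23/1000" using sub r99 spos by (simp add: field_simps)
  have B: "1/48 \<le> (1 - \<theta>) * (31 / k^3) - s / r"
  proof -
    have "(1/2) * (17/100) \<le> (1 - \<theta>) * (31 / k^3)" using c1 assms(2) by (intro mult_mono) auto
    then show ?thesis using c2 by linarith
  qed
  have "\<theta> / (20 * sqrt (2 * pi)) \<le> \<theta> / 48"
    using spi assms(1) by (intro divide_left_mono) auto
  also have "\<dots> \<le> \<theta> * ((1 - \<theta>) * (31 / k^3) - s / r)"
    using B assms(1) by (simp add: mult_left_mono[OF B, of \<theta>, simplified])
  also have "\<dots> = (s * \<theta> * ((1 - \<theta>) * (31 / k^3) - s / r)) / s" using spos by simp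
  also have "\<dots> \<le> D w / s" using low eq spos by (intro divide_right_mono) auto
  finally show ?thesis using D(1) unfolding s_def by blast
qed


end
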